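(* Let $n,t,m$ be positive integers, $m\ge 0$ allowed, let $\sigma\in\mathcal{S}_n$, and let $\sigma_e$ be obtained from $\sigma$ by a burst of stuck-at errors of length at most $t$ with threshold $m$ (as defined in the context). For $i\ge1$ let $B_{i,1}=\{2(i-1)t+1,\ldots,2it\}\cap[n]$ and $B_{i,2}=\{t+2(i-1)t+1,\ldots,t+2it\}\cap[n]$. Let $E_1$ be the set of $i\in[\lceil n/(2t)\rceil]$ such that at least one value in $B_{i,1}$ does not appear in $\sigma_e$, and $E_2$ the set of $i\in[\lceil (n-t)/(2t)\rceil]$ such that at least one value in $B_{i,2}$ does not appear in $\sigma_e$. Then $|E_1|\le1$ or $|E_2|\le 1$.
   Context: $[n]=\{1,\ldots,n\}$; $\mathcal{S}_n$ is the set of permutations of $[n]$ written as sequences. Burst of stuck-at errors of length at most $t$ with threshold $m$: $\sigma_e\in[n]^n$ is obtained from $\sigma$ if there exist $j\in[n]$, $t_1\in[t]$ and positions $i_1,\ldots,i_{t_1}$ with $\sigma(i_\ell)=j+\ell-1$ and $\sigma(i_\ell)>m$ for all $\ell\in[t_1]$, such that $\sigma_e(i_\ell)=j$ for all $\ell\in[t_1]$ and $\sigma_e(i)=\sigma(i)$ for all other $i$. *)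

theory Defs
  imports Complex_Main
begin

definition is_perm :: "nat \<Rightarrow> (nat \<Rightarrow> nat) \<Rightarrow> bool" where
  "is_perm n \<sigma> \<longleftrightarrow> bij_betw \<sigma> {1..n} {1..n}"

definition burst_stuck :: "nat \<Rightarrow> nat \<Rightarrow> nat \<Rightarrow> (nat \<Rightarrow> nat) \<Rightarrow> (nat \<Rightarrow> nat) \<Rightarrow> bool" where
  "burst_stuck n t m \<sigma> \<sigma>e \<longleftrightarrow>
     (\<forall>i\<in>{1..n}. \<sigma>e i \<in> {1..n}) \<and>
     (\<exists>j\<in>{1..n}. \<exists>t1\<in>{1..t}. \<exists>pos :: nat \<Rightarrow> nat.
        (\<forall>l\<in>{1..t1}. pos l \<in> {1..n} \<and> \<sigma> (pos l) = j + l - 1 \<and> \<sigma> (pos l) > m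
                        \<and> \<sigma>e (pos l) = j) \<and>
        (\<forall>i\<in>{1..n}. i \<notin> pos ` {1..t1} \<longrightarrow> \<sigma>e i = \<sigma> i))"

definition blockB1 :: "nat \<Rightarrow> nat \<Rightarrow> nat \<Rightarrow> nat set" where
  "blockB1 n t i = {2*(i-1)*t+1 .. 2*i*t} \<inter> {1..n}"

definition blockB2 :: "nat \<Rightarrow> nat \<Rightarrow> nat \<Rightarrow> nat set" where
  "blockB2 n t i = {t + 2*(i-1)*t+1 .. t + 2*i*t} \<inter> {1..n}"

definition E1 :: "nat \<Rightarrow> nat \<Rightarrow> (nat \<Rightarrow> nat) \<Rightarrow> nat set" where
  "E1 n t \<sigma>e = {i \<in> {1 .. nat \<lceil>real n / (2 * real t)\<rceil>}.
                    \<exists>v \<in> blockB1 n t i. v \<notin> \<sigma>e ` {1..n}}"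

definition E2 :: "nat \<Rightarrow> nat \<Rightarrow> (nat \<Rightarrow> nat) \<Rightarrow> nat set" where
  "E2 n t \<sigma>e = {i \<in> {1 .. nat \<lceil>(real n - real t) / (2 * real t)\<rceil>}.
                    \<exists>v \<in> blockB2 n t i. v \<notin> \<sigma>e ` {1..n}}"

end

theory Submission
  imports Defs
begin

lemma arith_key:
  fixes a b t :: nat
  assumes "t \<ge> 1" "b + 2 \<le> a + t" "1 \<le> a"
  shows "(\<exists>c. \<forall>v\<in>{a..b}. (v-1) div (2*t) = c) \<or>
         (\<exists>c. \<forall>v\<in>{a..b}. t < v \<and> (v-1-t) div (2*t) = c)"
proof (cases "(a-1) div (2*t) = (b-1) div (2*t)")
  case True
  have "\<forall>v\<in>{a..b}. (v-1) div (2*t) = (b-1) div (2*t)"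
  proof
    fix v assume v: "v \<in> {a..b}"
    have "(a-1) div (2*t) \<le> (v-1) div (2*t)" using v by (intro div_le_mono) auto
    moreover have "(v-1) div (2*t) \<le> (b-1) div (2*t)" using v by (intro div_le_mono) auto
    ultimately show "(v-1) div (2*t) = (b-1) div (2*t)" using True by simp
  qed
  then show ?thesis by blast
next
  case False
  show ?thesis
  proof (cases "a \<le> b")
    case False then show ?thesis by auto
  next
  case ab: True
  define q where "q = (b-1) div (2*t)"
  have "(a-1) div (2*t) \<le> q" unfolding q_def using ab by (intro div_le_mono) auto
  with False have lt: "(a-1) div (2*t) < q" unfolding q_def by simp
  have h1: "2*t*q \<le> b-1" unfolding q_def by (metis div_times_less_eq_dividend mult.commute)
  have h2: "a - 1 < 2*t*q"
  proof (rule ccontr)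
    assume "\<not> a - 1 < 2*t*q"
    then have "2*t*q \<le> a-1" by simp
    then have "(2*t*q) div (2*t) \<le> (a-1) div (2*t)" by (rule div_le_mono)
    then show False using lt assms(1) by simp
  qed
  have q1: "q \<ge> 1" using lt by simp
  have "\<forall>v\<in>{a..b}. t < v \<and> (v-1-t) div (2*t) = q - 1"
  proof
    fix v assume v: "v \<in> {a..b}"
    have e: "2*t*(q-1) + 2*t = 2*t*q" using q1 by (cases q) (auto simp: algebra_simps)
    have va: "a \<le> v" "v \<le> b" using v by auto
    have lo: "2*t*(q-1) \<le> v-1-t" using va e h1 assms by linarith
    have hi: "v-1-t < 2*t*(q-1) + 2*t" using va e h2 assms by linarith
    have "t < v" using va e h1 assms by linarith
    moreover have "(v-1-t) div (2*t) = q - 1"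
    proof (rule div_nat_eqI)
      show "2*t*(q-1) \<le> v-1-t" by (rule lo)
      have "2*t*Suc (q-1) = 2*t*(q-1) + 2*t" by simp
      then show "v-1-t < 2*t*Suc (q-1)" using hi by linarith
    qed
    ultimately show "t < v \<and> (v-1-t) div (2*t) = q - 1" by simp
  qed
  then show ?thesis by blast
qed
qed

lemma blk1:
  assumes "v \<in> blockB1 n t i" "i \<ge> 1" "t \<ge> 1"
  shows "(v-1) div (2*t) = i - 1"
proof (rule div_nat_eqI)
  have e: "2*t*i = 2*t*(i-1) + 2*t" using assms(2) by (cases i) auto
  have e2: "2*(i-1)*t = 2*t*(i-1)" by simp
  from assms(1) have f1: "2*(i-1)*t+1 \<le> v" and f2: "v \<le> 2*i*t" by (auto simp: blockB1_def)
  have e3: "2*i*t = 2*t*i" by simp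
  have e4: "2*t*Suc (i-1) = 2*t*(i-1) + 2*t" by simp
  show "2*t*(i-1) \<le> v-1" using f1 e2 by linarith
  show "v-1 < 2*t*Suc (i-1)" using f2 e3 e e4 assms(3) by linarith
qed

lemma blk2:
  assumes "v \<in> blockB2 n t i" "i \<ge> 1" "t \<ge> 1"
  shows "(v-1-t) div (2*t) = i - 1"
proof (rule div_nat_eqI)
  have e: "2*t*i = 2*t*(i-1) + 2*t" using assms(2) by (cases i) auto
  have e2: "2*(i-1)*t = 2*t*(i-1)" by simp
  from assms(1) have f1: "t+2*(i-1)*t+1 \<le> v" and f2: "v \<le> t+2*i*t" by (auto simp: blockB2_def)
  have e3: "2*i*t = 2*t*i" by simp
  have e4: "2*t*Suc (i-1) = 2*t*(i-1) + 2*t" by simp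
  show "2*t*(i-1) \<le> v-1-t" using f1 e2 by linarith
  show "v-1-t < 2*t*Suc (i-1)" using f2 e3 e e4 assms(3) by linarith
qed

theorem lemma3:
  fixes n t m :: nat and \<sigma> \<sigma>e :: "nat \<Rightarrow> nat"
  assumes "n \<ge> 1" and "t \<ge> 1"
    and "is_perm n \<sigma>"
    and "burst_stuck n t m \<sigma> \<sigma>e"
  shows "card (E1 n t \<sigma>e) \<le> 1 \<or> card (E2 n t \<sigma>e) \<le> 1"
proof -
  from assms(4) obtain j t1 pos where j: "j \<in> {1..n}" and t1: "t1 \<in> {1..t}"
    and P: "\<forall>l\<in>{1..t1}. pos l \<in> {1..n} \<and> \<sigma> (pos l) = j + l - 1 \<and> \<sigma> (pos l) > m
                        \<and> \<sigma>e (pos l) = j"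
    and Q: "\<forall>i\<in>{1..n}. i \<notin> pos ` {1..t1} \<longrightarrow> \<sigma>e i = \<sigma> i"
    unfolding burst_stuck_def by blast
  have bij: "bij_betw \<sigma> {1..n} {1..n}" using assms(3) unfolding is_perm_def .
  have miss: "v \<in> {j+1..j+t-1}" if v: "v \<in> {1..n}" "v \<notin> \<sigma>e ` {1..n}" for v
  proof -
    from v(1) bij obtain p where p: "p \<in> {1..n}" "\<sigma> p = v"
      by (metis bij_betw_imp_surj_on imageE)
    have "p \<in> pos ` {1..t1}"
    proof (rule ccontr)
      assume "p \<notin> pos ` {1..t1}"
      then have "\<sigma>e p = v" using Q p by auto
      then show False using v(2) p(1) by auto
    qed
    then obtain l where l: "l \<in> {1..t1}" "p = pos l" by auto
    have "v = j + l - 1" "\<sigma>e (pos l) = j" using P l p by auto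
    moreover have "l \<noteq> 1"
    proof
      assume "l = 1"
      then have "v = j" using \<open>v = j + l - 1\<close> by simp
      moreover have "pos l \<in> {1..n}" using P l by auto
      ultimately show False using \<open>\<sigma>e (pos l) = j\<close> v(2) by (metis image_eqI)
    qed
    ultimately show ?thesis using l t1 by auto
  qed
  have "(\<exists>c. \<forall>v\<in>{j+1..j+t-1}. (v-1) div (2*t) = c) \<or>
         (\<exists>c. \<forall>v\<in>{j+1..j+t-1}. t < v \<and> (v-1-t) div (2*t) = c)"
    by (rule arith_key) (use assms(2) in auto)
  then show ?thesis
  proof
    assume "\<exists>c. \<forall>v\<in>{j+1..j+t-1}. (v-1) div (2*t) = c"
    then obtain c where c: "\<forall>v\<in>{j+1..j+t-1}. (v-1) div (2*t) = c" by blast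
    have "E1 n t \<sigma>e \<subseteq> {c+1}"
    proof
      fix i assume "i \<in> E1 n t \<sigma>e"
      then obtain v where i: "i \<ge> 1" "v \<in> blockB1 n t i" "v \<notin> \<sigma>e ` {1..n}"
        unfolding E1_def by auto
      have "v \<in> {1..n}" using i(2) unfolding blockB1_def by auto
      then have "v \<in> {j+1..j+t-1}" using miss i(3) by blast
      then have "(v-1) div (2*t) = c" using c by blast
      moreover have "(v-1) div (2*t) = i - 1" using blk1 i assms(2) by blast
      ultimately show "i \<in> {c+1}" using i(1) by auto
    qed
    then have "card (E1 n t \<sigma>e) \<le> card {c+1}" by (intro card_mono) auto
    then show ?thesis by simp
  next
    assume "\<exists>c. \<forall>v\<in>{j+1..j+t-1}. t < v \<and> (v-1-t) div (2*t) = c"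
    then obtain c where c: "\<forall>v\<in>{j+1..j+t-1}. t < v \<and> (v-1-t) div (2*t) = c" by blast
    have "E2 n t \<sigma>e \<subseteq> {c+1}"
    proof
      fix i assume "i \<in> E2 n t \<sigma>e"
      then obtain v where i: "i \<ge> 1" "v \<in> blockB2 n t i" "v \<notin> \<sigma>e ` {1..n}"
        unfolding E2_def by auto
      have "v \<in> {1..n}" using i(2) unfolding blockB2_def by auto
      then have "v \<in> {j+1..j+t-1}" using miss i(3) by blast
      then have "(v-1-t) div (2*t) = c" using c by blast
      moreover have "(v-1-t) div (2*t) = i - 1" using blk2 i assms(2) by blast
      ultimately show "i \<in> {c+1}" using i(1) by auto
    qed
    then have "card (E2 n t \<sigma>e) \<le> card {c+1}" by (intro card_mono) auto
    then show ?thesis by simp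
  qed
qed

end
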